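(* Let $0<b\le c$ and let $\mu$ be a real number in $[\lambda_-(b),\lambda_+(b)]$. Then $\zeta_{(\mu,c)}$ is defined, $\int_0^c\zeta_{(\mu,c)}-\int_0^b\zeta_{(\mu,b)}=\mu(c-b)$, and $\zeta_{(\mu,c)}^{-1}(\{\mu\})$ is a closed interval of length at least $c-b$.
   Context: Fix $\kappa_0\in(0,1)$ and $r_0,r_b\in\mathbb{R}$ (the same $r_b$ is used for every value of the right endpoint). Let $F(u)=u/\sqrt{1-u^2}$ for $|u|<1$, $F(u)=+\infty$ for $u\ge1$, $F(u)=-\infty$ for $u\le-1$; $s_0=r_0/\sqrt{1+r_0^2}$, $s_b=r_b/\sqrt{1+r_b^2}$. Define $g_\pm(x)=F(\pm\kappa_0x+s_0)$ and, for each $c>0$, $h^c_\pm(x)=F(\mp\kappa_0(x-c)+s_b)$. $\lambda_+(c)$ is the common real value of $g_+$ and $h^c_+$ at the point where their graphs meet, or $+\infty$ if they do not meet; $\lambda_-(c)$ likewise for $g_-,h^c_-$, or $-\infty$. Assume there exists an absolutely continuous $f:[0,b]\to\mathbb{R}$ with $f'\in L^2$, $|f'|\le\kappa_0(1+f^2)^{3/2}$ a.e., $f(0)=r_0$, $f(b)=r_b$. For $c>0$ and real $\mu\in[\lambda_-(c),\lambda_+(c)]$, $\zeta_{(\mu,c)}:[0,c]\to\mathbb{R}$ is $\zeta_{(\mu,c)}(x)=\operatorname{mid}\big(h^c_-(x),g_-(x),\mu,g_+(x),h^c_+(x)\big)$, the median of five extended reals. *)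

theory Defs
  imports "HOL-Analysis.Analysis"
begin

definition abs_continuous_on :: "real \<Rightarrow> real \<Rightarrow> (real \<Rightarrow> real) \<Rightarrow> bool" where
  "abs_continuous_on a b f \<longleftrightarrow>
     (\<forall>\<epsilon>>0. \<exists>\<delta>>0. \<forall>(n::nat) (u::nat \<Rightarrow> real) (v::nat \<Rightarrow> real).
        (\<forall>i<n. a \<le> u i \<and> u i \<le> v i \<and> v i \<le> b) \<and>
        (\<forall>i<n. \<forall>j<n. i \<noteq> j \<longrightarrow> v i \<le> u j \<or> v j \<le> u i) \<and>
        (\<Sum>i<n. v i - u i) < \<delta>
        \<longrightarrow> (\<Sum>i<n. \<bar>f (v i) - f (u i)\<bar>) < \<epsilon>)"

definition sfun :: "real \<Rightarrow> real" where
  "sfun r = r / sqrt (1 + r\<^sup>2)"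

definition Fe :: "real \<Rightarrow> ereal" where
  "Fe u = (if 1 \<le> u then \<infinity> else if u \<le> -1 then -\<infinity> else ereal (u / sqrt (1 - u\<^sup>2)))"

definition gp :: "real \<Rightarrow> real \<Rightarrow> real \<Rightarrow> ereal" where
  "gp k r0 x = Fe (k * x + sfun r0)"
definition gm :: "real \<Rightarrow> real \<Rightarrow> real \<Rightarrow> ereal" where
  "gm k r0 x = Fe (- k * x + sfun r0)"
definition hp :: "real \<Rightarrow> real \<Rightarrow> real \<Rightarrow> real \<Rightarrow> ereal" where
  "hp k rb c x = Fe (- k * (x - c) + sfun rb)"
definition hm :: "real \<Rightarrow> real \<Rightarrow> real \<Rightarrow> real \<Rightarrow> ereal" where
  "hm k rb c x = Fe (k * (x - c) + sfun rb)"

definition lam_plus :: "real \<Rightarrow> real \<Rightarrow> real \<Rightarrow> real \<Rightarrow> ereal" where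
  "lam_plus k r0 rb c =
     (if \<exists>x v. gp k r0 x = ereal v \<and> hp k rb c x = ereal v
      then ereal (THE v. \<exists>x. gp k r0 x = ereal v \<and> hp k rb c x = ereal v)
      else \<infinity>)"
definition lam_minus :: "real \<Rightarrow> real \<Rightarrow> real \<Rightarrow> real \<Rightarrow> ereal" where
  "lam_minus k r0 rb c =
     (if \<exists>x v. gm k r0 x = ereal v \<and> hm k rb c x = ereal v
      then ereal (THE v. \<exists>x. gm k r0 x = ereal v \<and> hm k rb c x = ereal v)
      else -\<infinity>)"

definition mid5 :: "ereal \<Rightarrow> ereal \<Rightarrow> ereal \<Rightarrow> ereal \<Rightarrow> ereal \<Rightarrow> ereal" where
  "mid5 a b c d e = sort [a, b, c, d, e] ! 2"

definition zeta :: "real \<Rightarrow> real \<Rightarrow> real \<Rightarrow> real \<Rightarrow> real \<Rightarrow> real \<Rightarrow> ereal" where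
  "zeta k r0 rb \<mu> c x = mid5 (hm k rb c x) (gm k r0 x) (ereal \<mu>) (gp k r0 x) (hp k rb c x)"

definition zeta_defined :: "real \<Rightarrow> real \<Rightarrow> real \<Rightarrow> real \<Rightarrow> real \<Rightarrow> bool" where
  "zeta_defined k r0 rb \<mu> c \<longleftrightarrow> 0 < c \<and> lam_minus k r0 rb c \<le> ereal \<mu> \<and> ereal \<mu> \<le> lam_plus k r0 rb c \<and>
     (\<forall>x\<in>{0..c}. \<bar>zeta k r0 rb \<mu> c x\<bar> \<noteq> \<infinity>)"

end

theory Submission
  imports Defs
begin


lemma sfun_deriv: "(sfun has_real_derivative 1 / ((1 + r\<^sup>2) * sqrt (1 + r\<^sup>2))) (at r)"
proof -
  have p: "0 < 1 + r\<^sup>2" by (simp add: add_pos_nonneg)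
  have "((\<lambda>r. r / sqrt (1 + r\<^sup>2)) has_real_derivative
      (1 * sqrt (1 + r\<^sup>2) - r * (inverse (sqrt (1 + r\<^sup>2)) / 2 * (2 * r))) / (sqrt (1 + r\<^sup>2))\<^sup>2) (at r)"
    using p by (auto intro!: derivative_eq_intros)
  moreover have "(1 * sqrt (1 + r\<^sup>2) - r * (inverse (sqrt (1 + r\<^sup>2)) / 2 * (2 * r))) / (sqrt (1 + r\<^sup>2))\<^sup>2
     = 1 / ((1 + r\<^sup>2) * sqrt (1 + r\<^sup>2))"
    using p by (simp add: field_simps power2_eq_square)
  ultimately show ?thesis unfolding sfun_def[abs_def] by simp
qed

lemma sfun_deriv_pos: "0 < 1 / ((1 + r\<^sup>2) * sqrt (1 + r\<^sup>2))"
  by (simp add: add_pos_nonneg)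

lemma sfun_deriv_le1: "1 / ((1 + r\<^sup>2) * sqrt (1 + r\<^sup>2)) \<le> 1"
proof -
  have "1 \<le> 1 + r\<^sup>2" by simp
  moreover have "1 \<le> sqrt (1 + r\<^sup>2)" by simp
  ultimately have "1 \<le> (1 + r\<^sup>2) * sqrt (1 + r\<^sup>2)" using mult_mono[of 1 "1+r\<^sup>2" 1 "sqrt (1+r\<^sup>2)"] by simp
  then show ?thesis by simp
qed

lemma sfun_strict_mono: "x < y \<Longrightarrow> sfun x < sfun y"
  using DERIV_pos_imp_increasing[of x y sfun] sfun_deriv sfun_deriv_pos by blast

lemma sfun_mono_iff: "sfun x \<le> sfun y \<longleftrightarrow> x \<le> y"
proof
  assume "sfun x \<le> sfun y" then show "x \<le> y"
    using sfun_strict_mono[of y x] by linarith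
next
  assume "x \<le> y" then show "sfun x \<le> sfun y"
    using sfun_strict_mono[of x y] by (cases "x = y") auto
qed

lemma sfun_lip: "\<bar>sfun x - sfun y\<bar> \<le> \<bar>x - y\<bar>"
proof -
  have *: "sfun v - sfun u \<le> v - u" if uv: "u < v" for u v
  proof -
    obtain z where "u < z" "z < v" "sfun v - sfun u = (v - u) * (1 / ((1 + z\<^sup>2) * sqrt (1 + z\<^sup>2)))"
      using MVT2[OF uv, of sfun "\<lambda>r. 1 / ((1 + r\<^sup>2) * sqrt (1 + r\<^sup>2))"] sfun_deriv by blast
    moreover have "(v - u) * (1 / ((1 + z\<^sup>2) * sqrt (1 + z\<^sup>2))) \<le> (v - u) * 1"
      using uv sfun_deriv_le1[of z] by (intro mult_left_mono) auto
    ultimately show ?thesis by simp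
  qed
  show ?thesis
  proof (cases x y rule: linorder_cases)
    case less then show ?thesis using *[OF less] sfun_strict_mono[OF less] by simp
  next
    case greater then show ?thesis using *[OF greater] sfun_strict_mono[OF greater] by simp
  qed simp
qed

lemma sfun_bound: "\<bar>sfun r\<bar> < 1"
proof -
  have "\<bar>r\<bar> < sqrt (1 + r\<^sup>2)"
    by (metis abs_sqrt_wlog less_add_one power2_less_imp_less real_sqrt_abs real_sqrt_less_iff real_sqrt_pow2_iff zero_le_power2 add.commute abs_ge_zero)
  moreover have "0 < sqrt (1 + r\<^sup>2)" by (simp add: add_pos_nonneg)
  ultimately show ?thesis unfolding sfun_def by (simp add: abs_div divide_less_eq)
qed




abbreviation cont :: "real set \<Rightarrow> real" where "cont \<equiv> Henstock_Kurzweil_Integration.content"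

lemma tdiv_elem:
  assumes p: "p tagged_division_of {a..b::real}" and y: "y \<in> p"
  shows "\<exists>u v. snd y = {u..v} \<and> u \<le> fst y \<and> fst y \<le> v \<and> a \<le> u \<and> v \<le> b"
proof -
  have y': "(fst y, snd y) \<in> p" using y by simp
  obtain u v where k: "snd y = cbox u v" using tagged_division_ofD(4)[OF p y'] by blast
  have "fst y \<in> snd y" using tagged_division_ofD(2)[OF p y'] .
  moreover have "snd y \<subseteq> {a..b}" using tagged_division_ofD(3)[OF p y'] .
  ultimately show ?thesis using k by (intro exI[of _ u] exI[of _ v]) auto
qed

lemma ac_bound:
  fixes f g :: "real \<Rightarrow> real" and E :: "real set"
  assumes ac: "abs_continuous_on 0 b f" and b: "0 \<le> b" and K: "0 \<le> K"
    and negE: "negligible E"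
    and lip: "\<And>x y. \<bar>g x - g y\<bar> \<le> \<bar>f x - f y\<bar>"
    and der: "\<And>x. x \<in> {0..b} \<Longrightarrow> x \<notin> E \<Longrightarrow> \<exists>D. (g has_real_derivative D) (at x within {0..b}) \<and> \<bar>D\<bar> \<le> K"
  shows "\<bar>g b - g 0\<bar> \<le> K * b"
proof (rule field_le_epsilon)
  fix e :: real assume e: "0 < e"
  define \<epsilon> where "\<epsilon> = e / (b + 1)"
  have \<epsilon>: "0 < \<epsilon>" using e b unfolding \<epsilon>_def by simp
  have "\<epsilon> * (b + 1) = e" using b unfolding \<epsilon>_def by simp
  moreover have "(K + \<epsilon>) * b + \<epsilon> = K * b + \<epsilon> * (b + 1)" by (simp add: distrib_left distrib_right)
  ultimately have eeq: "(K + \<epsilon>) * b + \<epsilon> = K * b + e" by simp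
  have acf: "\<forall>\<epsilon>>0. \<exists>\<delta>>0. \<forall>(n::nat) (u::nat \<Rightarrow> real) (v::nat \<Rightarrow> real).
        (\<forall>i<n. 0 \<le> u i \<and> u i \<le> v i \<and> v i \<le> b) \<and>
        (\<forall>i<n. \<forall>j<n. i \<noteq> j \<longrightarrow> v i \<le> u j \<or> v j \<le> u i) \<and>
        (\<Sum>i<n. v i - u i) < \<delta>
        \<longrightarrow> (\<Sum>i<n. \<bar>f (v i) - f (u i)\<bar>) < \<epsilon>"
    using ac unfolding abs_continuous_on_def .
  have "\<exists>\<delta>>0. \<forall>(n::nat) (u::nat \<Rightarrow> real) (v::nat \<Rightarrow> real).
        (\<forall>i<n. 0 \<le> u i \<and> u i \<le> v i \<and> v i \<le> b) \<and>
        (\<forall>i<n. \<forall>j<n. i \<noteq> j \<longrightarrow> v i \<le> u j \<or> v j \<le> u i) \<and>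
        (\<Sum>i<n. v i - u i) < \<delta>
        \<longrightarrow> (\<Sum>i<n. \<bar>f (v i) - f (u i)\<bar>) < \<epsilon>"
    by (rule mp[OF spec[OF acf, of \<epsilon>] \<epsilon>])
  then obtain \<delta> where "\<delta> > 0" and \<delta>0: "\<forall>(n::nat) (u::nat \<Rightarrow> real) (v::nat \<Rightarrow> real).
        (\<forall>i<n. 0 \<le> u i \<and> u i \<le> v i \<and> v i \<le> b) \<and>
        (\<forall>i<n. \<forall>j<n. i \<noteq> j \<longrightarrow> v i \<le> u j \<or> v j \<le> u i) \<and>
        (\<Sum>i<n. v i - u i) < \<delta>
        \<longrightarrow> (\<Sum>i<n. \<bar>f (v i) - f (u i)\<bar>) < \<epsilon>"
    by (elim exE conjE) (rule that)
  have \<delta>: "(\<Sum>i<n. \<bar>f (v i) - f (u i)\<bar>) < \<epsilon>" if "\<forall>i<n. 0 \<le> u i \<and> u i \<le> v i \<and> v i \<le> b"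
      "\<forall>i<n. \<forall>j<n. i \<noteq> j \<longrightarrow> v i \<le> u j \<or> v j \<le> u i" "(\<Sum>i<n. v i - u i) < \<delta>" for n :: nat and u v :: "nat \<Rightarrow> real"
    using \<delta>0[THEN spec, THEN spec, THEN spec, of n u v] that by blast
  have "((indicator E :: real \<Rightarrow> real) has_integral 0) (cbox 0 b)" using negE unfolding negligible_def by blast
  then have "((indicator E :: real \<Rightarrow> real) has_integral 0) {0..b}" by (simp add: cbox_interval)
  then have intf: "\<forall>e>0. \<exists>\<gamma>. gauge \<gamma> \<and> (\<forall>D. D tagged_division_of {0..b} \<and> \<gamma> fine D \<longrightarrow>
       norm ((\<Sum>(x,k)\<in>D. cont k *\<^sub>R indicat_real E x) - 0) < e)"
    unfolding has_integral_real .
  have "\<exists>\<gamma>. gauge \<gamma> \<and> (\<forall>D. D tagged_division_of {0..b} \<and> \<gamma> fine D \<longrightarrow>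
       norm ((\<Sum>(x,k)\<in>D. cont k *\<^sub>R indicat_real E x) - 0) < \<delta>)"
    by (rule mp[OF spec[OF intf, of \<delta>] \<open>\<delta> > 0\<close>])
  then obtain \<gamma>1 where g1: "gauge \<gamma>1" and g1': "\<forall>D. D tagged_division_of {0..b} \<and> \<gamma>1 fine D \<longrightarrow>
       norm ((\<Sum>(x,k)\<in>D. cont k *\<^sub>R indicat_real E x) - 0) < \<delta>"
    by (elim exE conjE)
  have \<gamma>1: "\<bar>\<Sum>(x,k)\<in>D. cont k * indicat_real E x\<bar> < \<delta>" if "D tagged_division_of {0..b}" "\<gamma>1 fine D" for D
    using g1' that by simp
  have loc: "\<exists>r>0. \<forall>y\<in>{0..b}. \<bar>y - x\<bar> < r \<longrightarrow> \<bar>g y - g x\<bar> \<le> (K + \<epsilon>) * \<bar>y - x\<bar>"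
    if x: "x \<in> {0..b}" "x \<notin> E" for x
  proof -
    obtain D where D: "(g has_real_derivative D) (at x within {0..b})" "\<bar>D\<bar> \<le> K" using der x by blast
    then have "(g has_derivative (*) D) (at x within {0..b})" by (simp add: has_field_derivative_def)
    then obtain r where r: "r > 0" "\<forall>y\<in>{0..b}. \<bar>y - x\<bar> < r \<longrightarrow> \<bar>g y - g x - D * (y - x)\<bar> \<le> \<epsilon> * \<bar>y - x\<bar>"
      unfolding has_derivative_within_alt using \<epsilon> by (auto simp: real_norm_def)
    have "\<bar>g y - g x\<bar> \<le> (K + \<epsilon>) * \<bar>y - x\<bar>" if "y \<in> {0..b}" "\<bar>y - x\<bar> < r" for y
    proof -
      have "\<bar>D * (y - x)\<bar> \<le> K * \<bar>y - x\<bar>" using D(2) by (simp add: abs_mult mult_right_mono)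
      moreover have "\<bar>g y - g x - D * (y - x)\<bar> \<le> \<epsilon> * \<bar>y - x\<bar>" using r(2) that by blast
      moreover have "\<bar>g y - g x\<bar> \<le> \<bar>g y - g x - D * (y - x)\<bar> + \<bar>D * (y - x)\<bar>"
        by (metis abs_triangle_ineq diff_add_cancel)
      ultimately show ?thesis by (simp add: distrib_right)
    qed
    then show ?thesis using r(1) by blast
  qed
  define R where "R x = (if x \<in> {0..b} \<and> x \<notin> E then
      SOME r. r > 0 \<and> (\<forall>y\<in>{0..b}. \<bar>y - x\<bar> < r \<longrightarrow> \<bar>g y - g x\<bar> \<le> (K + \<epsilon>) * \<bar>y - x\<bar>) else 1)" for x
  have R: "R x > 0 \<and> (x \<in> {0..b} \<and> x \<notin> E \<longrightarrow> (\<forall>y\<in>{0..b}. \<bar>y - x\<bar> < R x \<longrightarrow> \<bar>g y - g x\<bar> \<le> (K + \<epsilon>) * \<bar>y - x\<bar>))" for x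
  proof (cases "x \<in> {0..b} \<and> x \<notin> E")
    case True
    then have "\<exists>r. r > 0 \<and> (\<forall>y\<in>{0..b}. \<bar>y - x\<bar> < r \<longrightarrow> \<bar>g y - g x\<bar> \<le> (K + \<epsilon>) * \<bar>y - x\<bar>)"
      using loc[of x] by blast
    then have "(SOME r. r > 0 \<and> (\<forall>y\<in>{0..b}. \<bar>y - x\<bar> < r \<longrightarrow> \<bar>g y - g x\<bar> \<le> (K + \<epsilon>) * \<bar>y - x\<bar>)) > 0 \<and>
       (\<forall>y\<in>{0..b}. \<bar>y - x\<bar> < (SOME r. r > 0 \<and> (\<forall>y\<in>{0..b}. \<bar>y - x\<bar> < r \<longrightarrow> \<bar>g y - g x\<bar> \<le> (K + \<epsilon>) * \<bar>y - x\<bar>)) \<longrightarrow> \<bar>g y - g x\<bar> \<le> (K + \<epsilon>) * \<bar>y - x\<bar>)"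
      by (rule someI_ex)
    then show ?thesis using True by (simp only: R_def if_P[OF True] simp_thms if_True) blast
  next
    case False
    then have "R x = 1" by (simp only: R_def if_not_P[OF False] if_False)
    then show ?thesis using False by auto
  qed
  define \<gamma> where "\<gamma> x = \<gamma>1 x \<inter> ball x (R x)" for x
  have Rpos: "\<forall>x. 0 < R x" using R by blast
  have "gauge \<gamma>" unfolding \<gamma>_def by (rule gauge_Int[OF g1 gauge_ball_dependent[OF Rpos]])
  then obtain p where p: "p tagged_division_of {0..b}" "\<gamma> fine p"
    using fine_division_exists_real[of \<gamma> 0 b] by blast
  have fine1: "\<gamma>1 fine p"
    using p(2) unfolding fine_def \<gamma>_def by auto
  have fine2: "snd y \<subseteq> ball (fst y) (R (fst y))" if "y \<in> p" for y
    using p(2) that unfolding fine_def \<gamma>_def by (cases y) auto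
  have finp: "finite p" using p(1) by blast
  define h :: "real \<times> real set \<Rightarrow> real" where "h y = \<bar>g (Sup (snd y)) - g (Inf (snd y))\<bar>" for y
  define hf :: "real \<times> real set \<Rightarrow> real" where "hf y = \<bar>f (Sup (snd y)) - f (Inf (snd y))\<bar>" for y
  have tel: "(\<Sum>y\<in>p. g (Sup (snd y)) - g (Inf (snd y))) = g b - g 0"
    using additive_tagged_division_1[OF b p(1), of g] by (simp add: case_prod_unfold)
  have "\<bar>g b - g 0\<bar> \<le> (\<Sum>y\<in>p. h y)" unfolding h_def tel[symmetric] by (rule sum_abs)
  also have "\<dots> = (\<Sum>y\<in>p. if fst y \<in> E then h y else 0) + (\<Sum>y\<in>p. if fst y \<notin> E then h y else 0)"
    by (simp add: sum.distrib[symmetric]) (rule sum.cong; simp)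
  finally have tot: "\<bar>g b - g 0\<bar> \<le> (\<Sum>y\<in>p. if fst y \<in> E then h y else 0) + (\<Sum>y\<in>p. if fst y \<notin> E then h y else 0)" .
  have P2a: "(\<Sum>y\<in>p. if fst y \<notin> E then h y else 0) \<le> (\<Sum>y\<in>p. (K + \<epsilon>) * cont (snd y))"
  proof (rule sum_mono)
    fix y assume y: "y \<in> p"
    obtain u v where uv: "snd y = {u..v}" "u \<le> fst y" "fst y \<le> v" "0 \<le> u" "v \<le> b"
      using tdiv_elem[OF p(1) y] by blast
    have c: "cont (snd y) = v - u" using uv by (simp add: content_real)
    show "(if fst y \<notin> E then h y else 0) \<le> (K + \<epsilon>) * cont (snd y)"
    proof (cases "fst y \<in> E")
      case True then show ?thesis using c uv K \<epsilon> by simp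
    next
      case False
      let ?x = "fst y"
      have bx: "?x \<in> {0..b}" using uv by auto
      have Rx: "\<forall>z\<in>{0..b}. \<bar>z - ?x\<bar> < R ?x \<longrightarrow> \<bar>g z - g ?x\<bar> \<le> (K + \<epsilon>) * \<bar>z - ?x\<bar>"
        using R[of ?x] bx False by blast
      have uvin: "u \<in> snd y" "v \<in> snd y" using uv by auto
      have inb: "u \<in> ball ?x (R ?x)" "v \<in> ball ?x (R ?x)" using fine2[OF y] uvin by blast+
      have vb: "v \<in> {0..b}" "u \<in> {0..b}" using uv by auto
      have dv: "\<bar>v - ?x\<bar> < R ?x" "\<bar>u - ?x\<bar> < R ?x" using inb by (auto simp: dist_real_def)
      have 1: "\<bar>g v - g ?x\<bar> \<le> (K + \<epsilon>) * \<bar>v - ?x\<bar>" using Rx vb dv by blast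
      have 2: "\<bar>g u - g ?x\<bar> \<le> (K + \<epsilon>) * \<bar>u - ?x\<bar>" using Rx vb dv by blast
      have av: "\<bar>v - ?x\<bar> = v - ?x" "\<bar>u - ?x\<bar> = ?x - u" using uv by auto
      have "h y = \<bar>g v - g u\<bar>" unfolding h_def using uv by simp
      also have "\<dots> \<le> \<bar>g v - g ?x\<bar> + \<bar>g u - g ?x\<bar>" by linarith
      also have "\<dots> \<le> (K + \<epsilon>) * (v - ?x) + (K + \<epsilon>) * (?x - u)" using 1 2 av by simp
      also have "\<dots> = (K + \<epsilon>) * cont (snd y)" unfolding c by (simp add: algebra_simps)
      finally show ?thesis using False by simp
    qed
  qed
  have P2b: "(\<Sum>y\<in>p. (K + \<epsilon>) * cont (snd y)) = (K + \<epsilon>) * b"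
    using additive_content_tagged_division[of p 0 b] p(1) b
    by (simp add: sum_distrib_left[symmetric] case_prod_unfold cbox_interval)
  have P1: "(\<Sum>y\<in>p. if fst y \<in> E then h y else 0) \<le> \<epsilon>"
  proof -
    define q where "q = {y\<in>p. fst y \<in> E \<and> cont (snd y) > 0}"
    have finq: "finite q" using finp unfolding q_def by simp
    have qp: "q \<subseteq> p" unfolding q_def by auto
    have s1: "(\<Sum>y\<in>p. if fst y \<in> E then h y else 0) \<le> (\<Sum>y\<in>q. hf y)"
    proof -
      have "(\<Sum>y\<in>p. if fst y \<in> E then h y else 0) \<le> (\<Sum>y\<in>p. if y \<in> q then hf y else 0)"
      proof (rule sum_mono)
        fix y assume y: "y \<in> p"
        obtain u v where uv: "snd y = {u..v}" "u \<le> fst y" "fst y \<le> v" "0 \<le> u" "v \<le> b"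
          using tdiv_elem[OF p(1) y] by blast
        have c: "cont (snd y) = v - u" using uv by (simp add: content_real)
        have "h y \<le> hf y" unfolding h_def hf_def by (rule lip)
        moreover have "cont (snd y) = 0 \<Longrightarrow> h y = 0" using c uv unfolding h_def by simp
        moreover have "cont (snd y) > 0 \<or> cont (snd y) = 0" using c uv by linarith
        ultimately show "(if fst y \<in> E then h y else 0) \<le> (if y \<in> q then hf y else 0)"
          unfolding q_def using y by (auto simp: hf_def h_def)
      qed
      also have "\<dots> = (\<Sum>y\<in>q. hf y)"
        using sum.inter_restrict[OF finp, of hf q] qp by (simp add: Int_absorb1)
      finally show ?thesis .
    qed
    have s2: "(\<Sum>y\<in>q. cont (snd y)) < \<delta>"
    proof -
      have "(\<Sum>y\<in>q. cont (snd y)) = (\<Sum>y\<in>p. if y \<in> q then cont (snd y) else 0)"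
        using sum.inter_restrict[OF finp, of "\<lambda>y. cont (snd y)" q] qp by (simp add: Int_absorb1)
      also have "\<dots> = (\<Sum>y\<in>p. cont (snd y) * indicat_real E (fst y))"
        by (rule sum.cong) (auto simp: q_def indicator_def less_le)
      also have "\<dots> \<le> \<bar>\<Sum>(x,k)\<in>p. cont k * indicat_real E x\<bar>" by (simp add: case_prod_unfold)
      also have "\<dots> < \<delta>" using \<gamma>1[OF p(1) fine1] .
      finally show ?thesis .
    qed
    obtain hh where hh: "bij_betw hh {0..<card q} q" using ex_bij_betw_nat_finite[OF finq] by blast
    define n where "n = card q"
    define u where "u i = Inf (snd (hh i))" for i
    define v where "v i = Sup (snd (hh i))" for i
    have hq: "hh i \<in> q" if "i < n" for i using hh that unfolding n_def bij_betw_def by auto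
    have uvi: "snd (hh i) = {u i..v i} \<and> 0 \<le> u i \<and> u i < v i \<and> v i \<le> b \<and> cont (snd (hh i)) = v i - u i" if "i < n" for i
    proof -
      have y: "hh i \<in> p" and cpos: "cont (snd (hh i)) > 0" using hq[OF that] unfolding q_def by auto
      obtain a c where ac: "snd (hh i) = {a..c}" "a \<le> fst (hh i)" "fst (hh i) \<le> c" "0 \<le> a" "c \<le> b"
        using tdiv_elem[OF p(1) y] by blast
      have "a < c" using cpos ac by (cases "a < c") (auto simp: content_real)
      then show ?thesis using ac unfolding u_def v_def by (simp add: content_real)
    qed
    have A: "\<forall>i<n. 0 \<le> u i \<and> u i \<le> v i \<and> v i \<le> b"
    proof (intro allI impI)
      fix i assume "i < n" then show "0 \<le> u i \<and> u i \<le> v i \<and> v i \<le> b" using uvi[of i] by auto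
    qed
    have B: "\<forall>i<n. \<forall>j<n. i \<noteq> j \<longrightarrow> v i \<le> u j \<or> v j \<le> u i"
    proof (intro allI impI)
      fix i j assume ij: "i < n" "j < n" "i \<noteq> j"
      have "hh i \<noteq> hh j" using hh ij unfolding bij_betw_def inj_on_def n_def by auto
      then have "(fst (hh i), snd (hh i)) \<noteq> (fst (hh j), snd (hh j))" by (simp add: prod_eq_iff)
      moreover have "(fst (hh i), snd (hh i)) \<in> p" "(fst (hh j), snd (hh j)) \<in> p"
        using hq ij qp by auto
      ultimately have "interior (snd (hh i)) \<inter> interior (snd (hh j)) = {}"
        using tagged_division_ofD(5)[OF p(1)] by blast
      then have dis: "{u i<..<v i} \<inter> {u j<..<v j} = {}" using uvi[OF ij(1)] uvi[OF ij(2)] by simp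
      show "v i \<le> u j \<or> v j \<le> u i"
      proof (rule ccontr)
        assume "\<not> (v i \<le> u j \<or> v j \<le> u i)"
        then have "(max (u i) (u j) + min (v i) (v j)) / 2 \<in> {u i<..<v i} \<inter> {u j<..<v j}"
          using uvi[OF ij(1)] uvi[OF ij(2)] by auto
        then show False using dis by blast
      qed
    qed
    have reidx: "(\<Sum>i<n. F (hh i)) = (\<Sum>y\<in>q. F y)" for F :: "_ \<Rightarrow> real"
      using sum.reindex_bij_betw[OF hh, of F] unfolding n_def by (simp add: lessThan_atLeast0)
    have C: "(\<Sum>i<n. v i - u i) < \<delta>"
    proof -
      have "(\<Sum>i<n. v i - u i) = (\<Sum>i<n. cont (snd (hh i)))"
      proof (rule sum.cong[OF refl])
        fix i assume "i \<in> {..<n}"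
        then have "cont (snd (hh i)) = v i - u i" using uvi[of i] by blast
        then show "v i - u i = cont (snd (hh i))" by simp
      qed
      also have "\<dots> = (\<Sum>y\<in>q. cont (snd y))" by (rule reidx)
      finally show ?thesis using s2 by simp
    qed
    have "(\<Sum>y\<in>q. hf y) = (\<Sum>i<n. hf (hh i))" by (rule reidx[symmetric])
    also have "\<dots> = (\<Sum>i<n. \<bar>f (v i) - f (u i)\<bar>)" unfolding hf_def u_def v_def by simp
    also have "\<dots> < \<epsilon>" by (rule \<delta>[OF A B C])
    finally show ?thesis using s1 by simp
  qed
  show "\<bar>g b - g 0\<bar> \<le> K * b + e" using tot P1 P2a P2b eeq by linarith
qed




lemma powr32: "(1 + r\<^sup>2) powr (3/2) = (1 + r\<^sup>2) * sqrt (1 + r\<^sup>2)"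
proof -
  have p: "0 < 1 + r\<^sup>2" by (simp add: add_pos_nonneg)
  have "(1 + r\<^sup>2) powr (3/2) = (1 + r\<^sup>2) powr (1 + 1/2)" by simp
  also have "\<dots> = (1 + r\<^sup>2) powr 1 * (1 + r\<^sup>2) powr (1/2)" by (rule powr_add)
  also have "\<dots> = (1 + r\<^sup>2) * sqrt (1 + r\<^sup>2)" using p by (simp add: powr_half_sqrt)
  finally show ?thesis .
qed

lemma s_diff_bound:
  fixes \<kappa>0 r0 rb b :: real
  assumes k0: "0 < \<kappa>0" and b: "0 < b"
    and fex: "\<exists>f f'. abs_continuous_on 0 b f
        \<and> (AE x in lborel. x \<in> {0..b} \<longrightarrow> (f has_real_derivative f' x) (at x within {0..b}))
        \<and> set_borel_measurable lborel {0..b} f'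
        \<and> set_integrable lborel {0..b} (\<lambda>x. (f' x)\<^sup>2)
        \<and> (AE x in lborel. x \<in> {0..b} \<longrightarrow> \<bar>f' x\<bar> \<le> \<kappa>0 * (1 + (f x)\<^sup>2) powr (3/2))
        \<and> f 0 = r0 \<and> f b = rb"
  shows "\<bar>sfun rb - sfun r0\<bar> \<le> \<kappa>0 * b"
proof -
  obtain f f' where ac: "abs_continuous_on 0 b f"
    and AE1: "AE x in lborel. x \<in> {0..b} \<longrightarrow> (f has_real_derivative f' x) (at x within {0..b})"
    and AE2: "AE x in lborel. x \<in> {0..b} \<longrightarrow> \<bar>f' x\<bar> \<le> \<kappa>0 * (1 + (f x)\<^sup>2) powr (3/2)"
    and f0: "f 0 = r0" and fb: "f b = rb"
    using fex by blast
  have "AE x in lborel. x \<in> {0..b} \<longrightarrow> (f has_real_derivative f' x) (at x within {0..b}) \<and>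
      \<bar>f' x\<bar> \<le> \<kappa>0 * (1 + (f x)\<^sup>2) powr (3/2)"
    using AE1 AE2 by eventually_elim blast
  then obtain N where N: "{x \<in> space lborel. \<not> (x \<in> {0..b} \<longrightarrow> (f has_real_derivative f' x) (at x within {0..b}) \<and>
      \<bar>f' x\<bar> \<le> \<kappa>0 * (1 + (f x)\<^sup>2) powr (3/2))} \<subseteq> N" "emeasure lborel N = 0" "N \<in> sets lborel"
    by (rule AE_E)
  have "N \<in> null_sets lborel" using N by (simp add: null_sets_def)
  then have "N \<in> null_sets lebesgue" by (rule null_sets_completionI)
  then have negN: "negligible N" by (simp add: negligible_iff_null_sets)
  have "\<bar>(\<lambda>x. sfun (f x)) b - (\<lambda>x. sfun (f x)) 0\<bar> \<le> \<kappa>0 * b"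
  proof (rule ac_bound[OF ac _ _ negN])
    show "0 \<le> b" "0 \<le> \<kappa>0" using b k0 by auto
    show "\<bar>sfun (f x) - sfun (f y)\<bar> \<le> \<bar>f x - f y\<bar>" for x y by (rule sfun_lip)
    fix x assume x: "x \<in> {0..b}" "x \<notin> N"
    then have d: "(f has_real_derivative f' x) (at x within {0..b})"
      and bd: "\<bar>f' x\<bar> \<le> \<kappa>0 * (1 + (f x)\<^sup>2) powr (3/2)" using N(1) by auto
    let ?q = "(1 + (f x)\<^sup>2) * sqrt (1 + (f x)\<^sup>2)"
    have qpos: "0 < ?q" by (simp add: add_pos_nonneg)
    have "((\<lambda>x. sfun (f x)) has_real_derivative (1 / ?q) * f' x) (at x within {0..b})"
      by (rule DERIV_chain2[OF sfun_deriv d])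
    moreover have "\<bar>(1 / ?q) * f' x\<bar> \<le> \<kappa>0"
    proof -
      have "\<bar>f' x\<bar> \<le> \<kappa>0 * ?q" using bd by (simp add: powr32)
      then have "\<bar>f' x\<bar> / ?q \<le> \<kappa>0" using qpos by (simp add: divide_le_eq)
      then show ?thesis using qpos by (simp add: abs_mult)
    qed
    ultimately show "\<exists>D. ((\<lambda>x. sfun (f x)) has_real_derivative D) (at x within {0..b}) \<and> \<bar>D\<bar> \<le> \<kappa>0"
      by blast
  qed
  then show ?thesis using f0 fb by simp
qed

definition Fr :: "real \<Rightarrow> real" where "Fr u = u / sqrt (1 - u\<^sup>2)"

lemma Fe_in: "\<bar>u\<bar> < 1 \<Longrightarrow> Fe u = ereal (Fr u)"
  unfolding Fe_def Fr_def by auto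

lemma Fe_real_iff: "Fe u = ereal v \<longleftrightarrow> \<bar>u\<bar> < 1 \<and> Fr u = v"
  unfolding Fe_def Fr_def by auto

lemma sfun_Fr: assumes "\<bar>u\<bar> < 1" shows "sfun (Fr u) = u"
proof -
  define w where "w = sqrt (1 - u\<^sup>2)"
  have u2: "u\<^sup>2 < 1" using assms by (simp add: abs_square_less_1)
  have wpos: "0 < w" unfolding w_def using u2 by simp
  have w2: "w\<^sup>2 = 1 - u\<^sup>2" unfolding w_def using u2 by simp
  have "1 + (u / w)\<^sup>2 = (1 / w)\<^sup>2" using wpos w2 by (simp add: field_simps)
  then have "sqrt (1 + (u / w)\<^sup>2) = 1 / w" using wpos by simp
  then show ?thesis unfolding sfun_def Fr_def w_def[symmetric] using wpos by simp
qed

lemma Fr_sfun: "Fr (sfun r) = r"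
proof -
  define q where "q = sqrt (1 + r\<^sup>2)"
  have qpos: "0 < q" unfolding q_def by (simp add: add_pos_nonneg)
  have q2: "q\<^sup>2 = 1 + r\<^sup>2" unfolding q_def by (simp add: add_nonneg_nonneg)
  have "1 - (r / q)\<^sup>2 = (q\<^sup>2 - r\<^sup>2) / q\<^sup>2" using qpos by (simp add: power_divide field_simps)
  also have "\<dots> = (1 / q)\<^sup>2" using q2 by (simp add: power_divide)
  finally have "1 - (r / q)\<^sup>2 = (1 / q)\<^sup>2" .
  then have "sqrt (1 - (r / q)\<^sup>2) = 1 / q" using qpos by simp
  then show ?thesis unfolding sfun_def Fr_def q_def[symmetric] using qpos by simp
qed

lemma Fr_le_iff: "\<bar>u\<bar> < 1 \<Longrightarrow> \<bar>v\<bar> < 1 \<Longrightarrow> Fr u \<le> Fr v \<longleftrightarrow> u \<le> v"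
  by (metis sfun_Fr sfun_mono_iff)

lemma Fr_inj: "\<bar>u\<bar> < 1 \<Longrightarrow> \<bar>v\<bar> < 1 \<Longrightarrow> Fr u = Fr v \<longleftrightarrow> u = v"
  by (metis sfun_Fr)

lemma Fe_sfun: "Fe (sfun \<mu>) = ereal \<mu>"
  using Fe_in[OF sfun_bound] Fr_sfun by simp

lemma Fe_mono: "mono Fe"
proof (rule monoI)
  fix u v :: real assume uv: "u \<le> v"
  show "Fe u \<le> Fe v"
  proof (cases "1 \<le> v")
    case True then show ?thesis by (simp add: Fe_def)
  next
    case False
    show ?thesis
    proof (cases "u \<le> -1")
      case True then show ?thesis by (simp add: Fe_def)
    next
      case F2: False
      have "\<bar>u\<bar> < 1" "\<bar>v\<bar> < 1" using False F2 uv by auto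
      then show ?thesis using Fe_in Fr_le_iff uv by simp
    qed
  qed
qed

lemma meet: "(Fe a = ereal v \<and> Fe a' = ereal v) \<longleftrightarrow> (\<bar>a\<bar> < 1 \<and> a = a' \<and> v = Fr a)"
  using Fe_real_iff Fr_inj by metis

lemma lam_plus_eq:
  assumes k: "0 < k"
  shows "lam_plus k r0 rb c = (let u = (k * c + sfun r0 + sfun rb) / 2 in if \<bar>u\<bar> < 1 then ereal (Fr u) else \<infinity>)"
proof -
  define u where "u = (k * c + sfun r0 + sfun rb) / 2"
  have P: "(gp k r0 x = ereal v \<and> hp k rb c x = ereal v) \<longleftrightarrow> (\<bar>u\<bar> < 1 \<and> k * x + sfun r0 = u \<and> v = Fr u)" for x v
  proof -
    have "(gp k r0 x = ereal v \<and> hp k rb c x = ereal v) \<longleftrightarrow>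
       (\<bar>k * x + sfun r0\<bar> < 1 \<and> k * x + sfun r0 = - k * (x - c) + sfun rb \<and> v = Fr (k * x + sfun r0))"
      unfolding gp_def hp_def by (rule meet)
    moreover have "k * x + sfun r0 = - k * (x - c) + sfun rb \<longleftrightarrow> k * x + sfun r0 = u"
      unfolding u_def by (simp add: algebra_simps)
    ultimately show ?thesis by auto
  qed
  show ?thesis
  proof (cases "\<bar>u\<bar> < 1")
    case True
    have ex: "\<exists>x v. gp k r0 x = ereal v \<and> hp k rb c x = ereal v"
      using P[of "(u - sfun r0) / k" "Fr u"] True k by simp blast
    have "(THE v. \<exists>x. gp k r0 x = ereal v \<and> hp k rb c x = ereal v) = Fr u"
    proof (rule the_equality)
      show "\<exists>x. gp k r0 x = ereal (Fr u) \<and> hp k rb c x = ereal (Fr u)"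
        using P[of "(u - sfun r0) / k" "Fr u"] True k by auto
      show "\<And>v. \<exists>x. gp k r0 x = ereal v \<and> hp k rb c x = ereal v \<Longrightarrow> v = Fr u"
        using P by blast
    qed
    then show ?thesis using ex True unfolding lam_plus_def u_def[symmetric] Let_def by simp
  next
    case False
    then have "\<not> (\<exists>x v. gp k r0 x = ereal v \<and> hp k rb c x = ereal v)" using P by blast
    then show ?thesis using False unfolding lam_plus_def u_def[symmetric] Let_def by simp
  qed
qed

lemma lam_minus_eq:
  assumes k: "0 < k"
  shows "lam_minus k r0 rb c = (let u = (sfun r0 + sfun rb - k * c) / 2 in if \<bar>u\<bar> < 1 then ereal (Fr u) else -\<infinity>)"
proof -
  define u where "u = (sfun r0 + sfun rb - k * c) / 2"
  have P: "(gm k r0 x = ereal v \<and> hm k rb c x = ereal v) \<longleftrightarrow> (\<bar>u\<bar> < 1 \<and> - k * x + sfun r0 = u \<and> v = Fr u)" for x v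
  proof -
    have "(gm k r0 x = ereal v \<and> hm k rb c x = ereal v) \<longleftrightarrow>
       (\<bar>- k * x + sfun r0\<bar> < 1 \<and> - k * x + sfun r0 = k * (x - c) + sfun rb \<and> v = Fr (- k * x + sfun r0))"
      unfolding gm_def hm_def by (rule meet)
    moreover have "- k * x + sfun r0 = k * (x - c) + sfun rb \<longleftrightarrow> - k * x + sfun r0 = u"
      unfolding u_def by (simp add: algebra_simps)
    ultimately show ?thesis by auto
  qed
  show ?thesis
  proof (cases "\<bar>u\<bar> < 1")
    case True
    have ex: "\<exists>x v. gm k r0 x = ereal v \<and> hm k rb c x = ereal v"
      using P[of "(sfun r0 - u) / k" "Fr u"] True k by simp blast
    have "(THE v. \<exists>x. gm k r0 x = ereal v \<and> hm k rb c x = ereal v) = Fr u"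
    proof (rule the_equality)
      show "\<exists>x. gm k r0 x = ereal (Fr u) \<and> hm k rb c x = ereal (Fr u)"
        using P[of "(sfun r0 - u) / k" "Fr u"] True k by auto
      show "\<And>v. \<exists>x. gm k r0 x = ereal v \<and> hm k rb c x = ereal v \<Longrightarrow> v = Fr u"
        using P by blast
    qed
    then show ?thesis using ex True unfolding lam_minus_def u_def[symmetric] Let_def by simp
  next
    case False
    then have "\<not> (\<exists>x v. gm k r0 x = ereal v \<and> hm k rb c x = ereal v)" using P by blast
    then show ?thesis using False unfolding lam_minus_def u_def[symmetric] Let_def by simp
  qed
qed

lemma med5:
  fixes a b c d e :: "'a::linorder"
  assumes "a \<le> e" "b \<le> d" "a \<le> d" "b \<le> e"
  shows "sort [a, b, c, d, e] ! 2 = max (max a b) (min c (min d e))"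
proof -
  have L: "mset [min a b, max a b] = mset [a, b]" by (cases "a \<le> b") (auto simp: min_def max_def)
  have U: "mset [min d e, max d e] = mset [d, e]" by (cases "d \<le> e") (auto simp: min_def max_def)
  have LU: "max a b \<le> min d e" using assms by (auto simp: max_def min_def)
  consider "c \<le> max a b" | "max a b \<le> c" "c \<le> min d e" | "min d e \<le> c" by (metis linear)
  then show ?thesis
  proof cases
    case 1
    define ys where "ys = [min (min a b) c, max (min a b) c, max a b, min d e, max d e]"
    have "mset [min (min a b) c, max (min a b) c] = mset [min a b, c]"
      by (cases "min a b \<le> c") (auto simp: min_def[of "min a b" c] max_def[of "min a b" c])
    then have "mset ys = mset [a, b, c, d, e]" using L U unfolding ys_def
      by (simp add: add_mset_commute)
    moreover have "sorted ys" unfolding ys_def using 1 LU by (auto simp: min_def max_def)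
    ultimately have "sort [a, b, c, d, e] = ys" by (rule properties_for_sort)
    then have "sort [a, b, c, d, e] ! 2 = ys ! 2" by (rule arg_cong)
    also have "ys ! 2 = max (max a b) (min c (min d e))" using 1 LU unfolding ys_def by (auto simp: max_def min_def)
    finally show ?thesis .
  next
    case 2
    define ys where "ys = [min a b, max a b, c, min d e, max d e]"
    have "mset ys = mset [a, b, c, d, e]" using L U unfolding ys_def
      by (simp add: add_mset_commute)
    moreover have "sorted ys" unfolding ys_def using 2 LU by (auto simp: min_def max_def)
    ultimately have "sort [a, b, c, d, e] = ys" by (rule properties_for_sort)
    then have "sort [a, b, c, d, e] ! 2 = ys ! 2" by (rule arg_cong)
    also have "ys ! 2 = max (max a b) (min c (min d e))" using 2 LU unfolding ys_def by (auto simp: max_def min_def)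
    finally show ?thesis .
  next
    case 3
    define ys where "ys = [min a b, max a b, min d e, min c (max d e), max c (max d e)]"
    have "mset [min c (max d e), max c (max d e)] = mset [c, max d e]"
      by (cases "c \<le> max d e") (auto simp: min_def[of c "max d e"] max_def[of c "max d e"])
    then have "mset ys = mset [a, b, c, d, e]" using L U unfolding ys_def
      by (simp add: add_mset_commute)
    moreover have "sorted ys" unfolding ys_def using 3 LU by (auto simp: min_def max_def)
    ultimately have "sort [a, b, c, d, e] = ys" by (rule properties_for_sort)
    then have "sort [a, b, c, d, e] ! 2 = ys ! 2" by (rule arg_cong)
    also have "ys ! 2 = max (max a b) (min c (min d e))" using 3 LU unfolding ys_def by (auto simp: max_def min_def)
    finally show ?thesis .
  qed
qed




definition zz :: "real \<Rightarrow> real \<Rightarrow> real \<Rightarrow> real \<Rightarrow> real \<Rightarrow> real" where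
  "zz s0 sb m X C = max (max (X - C + sb) (- X + s0)) (min m (min (X + s0) (- X + C + sb)))"

lemma zz_level:
  assumes "0 \<le> X" "X \<le> C" "\<bar>sb - s0\<bar> \<le> C"
  shows "zz s0 sb m X C = m \<longleftrightarrow> \<bar>m - s0\<bar> \<le> X \<and> \<bar>m - sb\<bar> \<le> C - X"
  using assms unfolding zz_def by (auto simp: max_def min_def abs_if split: if_splits)

lemma zz_left:
  assumes "0 \<le> X" "X \<le> \<bar>m - s0\<bar>" "\<bar>m - s0\<bar> + \<bar>m - sb\<bar> \<le> B" "B \<le> C" "\<bar>sb - s0\<bar> \<le> B"
  shows "zz s0 sb m X C = zz s0 sb m X B"
  using assms unfolding zz_def by (auto simp: max_def min_def abs_if split: if_splits)

lemma zz_right: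
  assumes "X \<le> C" "C - X \<le> \<bar>m - sb\<bar>" "\<bar>m - s0\<bar> + \<bar>m - sb\<bar> \<le> B" "B \<le> C" "\<bar>sb - s0\<bar> \<le> B"
  shows "zz s0 sb m X C = zz s0 sb m (X - C + B) B"
  using assms unfolding zz_def by (auto simp: max_def min_def abs_if split: if_splits)

lemma zz_bound:
  assumes "0 \<le> X" "X \<le> C" "\<bar>s0\<bar> < 1" "\<bar>sb\<bar> < 1" "\<bar>m\<bar> < 1"
  shows "\<bar>zz s0 sb m X C\<bar> < 1"
  using assms unfolding zz_def by (auto simp: max_def min_def abs_if split: if_splits)




lemma med_eq_Fe:
  fixes k s0 sb m x c :: real
  assumes "0 \<le> k" "0 \<le> x" "x \<le> c" "\<bar>sb - s0\<bar> \<le> k * c"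
  shows "mid5 (Fe (k * (x - c) + sb)) (Fe (- k * x + s0)) (Fe m) (Fe (k * x + s0)) (Fe (- k * (x - c) + sb))
     = Fe (zz s0 sb m (k * x) (k * c))"
proof -
  have kx: "0 \<le> k * x" "k * x \<le> k * c" using assms by (auto intro: mult_left_mono)
  have e1: "k * (x - c) = k * x - k * c" "- k * x = - (k * x)" "- k * (x - c) = - (k * x) + k * c"
    by (simp_all add: algebra_simps)
  have c1: "k * (x - c) + sb \<le> - k * (x - c) + sb" "- k * x + s0 \<le> k * x + s0"
     "k * (x - c) + sb \<le> k * x + s0" "- k * x + s0 \<le> - k * (x - c) + sb"
    using kx assms(4) by (simp_all add: algebra_simps abs_le_iff)
  have "mid5 (Fe (k * (x - c) + sb)) (Fe (- k * x + s0)) (Fe m) (Fe (k * x + s0)) (Fe (- k * (x - c) + sb))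
     = max (max (Fe (k * (x - c) + sb)) (Fe (- k * x + s0))) (min (Fe m) (min (Fe (k * x + s0)) (Fe (- k * (x - c) + sb))))"
    unfolding mid5_def by (rule med5) (use c1 monoD[OF Fe_mono] in blast)+
  also have "\<dots> = Fe (max (max (k * (x - c) + sb) (- k * x + s0)) (min m (min (k * x + s0) (- k * (x - c) + sb))))"
    by (simp add: max_of_mono[OF Fe_mono] min_of_mono[OF Fe_mono])
  also have "max (max (k * (x - c) + sb) (- k * x + s0)) (min m (min (k * x + s0) (- k * (x - c) + sb)))
      = zz s0 sb m (k * x) (k * c)"
    unfolding zz_def e1 by (simp add: algebra_simps)
  finally show ?thesis .
qed

theorem lemma2p6:
  fixes \<kappa>0 r0 rb b c \<mu> :: real
  assumes k0: "0 < \<kappa>0" "\<kappa>0 < 1"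
    and fex: "\<exists>f f'. abs_continuous_on 0 b f
        \<and> (AE x in lborel. x \<in> {0..b} \<longrightarrow> (f has_real_derivative f' x) (at x within {0..b}))
        \<and> set_borel_measurable lborel {0..b} f'
        \<and> set_integrable lborel {0..b} (\<lambda>x. (f' x)\<^sup>2)
        \<and> (AE x in lborel. x \<in> {0..b} \<longrightarrow> \<bar>f' x\<bar> \<le> \<kappa>0 * (1 + (f x)\<^sup>2) powr (3/2))
        \<and> f 0 = r0 \<and> f b = rb"
    and bc: "0 < b" "b \<le> c"
    and mu: "lam_minus \<kappa>0 r0 rb b \<le> ereal \<mu>" "ereal \<mu> \<le> lam_plus \<kappa>0 r0 rb b"
  shows "zeta_defined \<kappa>0 r0 rb \<mu> c
    \<and> (\<lambda>x. real_of_ereal (zeta \<kappa>0 r0 rb \<mu> c x)) integrable_on {0..c}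
    \<and> (\<lambda>x. real_of_ereal (zeta \<kappa>0 r0 rb \<mu> b x)) integrable_on {0..b}
    \<and> integral {0..c} (\<lambda>x. real_of_ereal (zeta \<kappa>0 r0 rb \<mu> c x))
        - integral {0..b} (\<lambda>x. real_of_ereal (zeta \<kappa>0 r0 rb \<mu> b x)) = \<mu> * (c - b)
    \<and> (\<exists>p q. p \<le> q \<and> {x\<in>{0..c}. zeta \<kappa>0 r0 rb \<mu> c x = ereal \<mu>} = {p..q} \<and> c - b \<le> q - p)"
proof -
  define k where "k = \<kappa>0"
  have k: "0 < k" using k0 unfolding k_def by simp
  define s0 where "s0 = sfun r0"
  define sb where "sb = sfun rb"
  define m where "m = sfun \<mu>"
  have sbd: "\<bar>s0\<bar> < 1" "\<bar>sb\<bar> < 1" "\<bar>m\<bar> < 1" unfolding s0_def sb_def m_def by (simp_all add: sfun_bound)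
  have Frm: "Fr m = \<mu>" unfolding m_def by (rule Fr_sfun)
  have Fem: "Fe m = ereal \<mu>" unfolding m_def by (rule Fe_sfun)
  have dB: "\<bar>sb - s0\<bar> \<le> k * b" unfolding sb_def s0_def k_def by (rule s_diff_bound[OF k0(1) bc(1) fex])
  have BC: "k * b \<le> k * c" using bc k by simp
  have dC: "\<bar>sb - s0\<bar> \<le> k * c" using dB BC by linarith
  have c0: "0 < c" using bc by linarith
  define upb where "upb = (k * b + s0 + sb) / 2"
  define upc where "upc = (k * c + s0 + sb) / 2"
  define lob where "lob = (s0 + sb - k * b) / 2"
  define loc where "loc = (s0 + sb - k * c) / 2"
  have lp: "lam_plus k r0 rb c' = (if \<bar>(k * c' + s0 + sb) / 2\<bar> < 1 then ereal (Fr ((k * c' + s0 + sb) / 2)) else \<infinity>)" for c'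
    using lam_plus_eq[OF k, of r0 rb c'] unfolding s0_def sb_def Let_def by simp
  have lm: "lam_minus k r0 rb c' = (if \<bar>(s0 + sb - k * c') / 2\<bar> < 1 then ereal (Fr ((s0 + sb - k * c') / 2)) else -\<infinity>)" for c'
    using lam_minus_eq[OF k, of r0 rb c'] unfolding s0_def sb_def Let_def by simp
  have mup: "m \<le> upb"
  proof (cases "\<bar>upb\<bar> < 1")
    case True
    then have "\<mu> \<le> Fr upb" using mu(2) lp[of b] unfolding k_def[symmetric] upb_def by simp
    then show ?thesis using Fr_le_iff[OF sbd(3) True] Frm by simp
  next
    case False
    have "sb \<le> upb" using dB unfolding upb_def abs_le_iff by (simp add: field_simps)
    then show ?thesis using False sbd unfolding abs_less_iff by (elim conjE) linarith
  qed
  have mlo: "lob \<le> m"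
  proof (cases "\<bar>lob\<bar> < 1")
    case True
    then have "Fr lob \<le> \<mu>" using mu(1) lm[of b] unfolding k_def[symmetric] lob_def by simp
    then show ?thesis using Fr_le_iff[OF True sbd(3)] Frm by simp
  next
    case False
    have "lob \<le> sb" using dB unfolding lob_def abs_le_iff by (simp add: field_simps)
    then show ?thesis using False sbd unfolding abs_less_iff by (elim conjE) linarith
  qed
  have mup2: "2 * m \<le> k * b + s0 + sb" using mup unfolding upb_def by simp
  have mlo2: "s0 + sb - k * b \<le> 2 * m" using mlo unfolding lob_def by simp
  have key: "\<bar>m - s0\<bar> + \<bar>m - sb\<bar> \<le> k * b" using mup2 mlo2 dB by (auto simp: abs_if)
  define \<alpha> where "\<alpha> = \<bar>m - s0\<bar> / k"
  define \<beta> where "\<beta> = \<bar>m - sb\<bar> / k"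
  have ka: "k * \<alpha> = \<bar>m - s0\<bar>" "k * \<beta> = \<bar>m - sb\<bar>" unfolding \<alpha>_def \<beta>_def using k by simp_all
  have ab0: "0 \<le> \<alpha>" "0 \<le> \<beta>" unfolding \<alpha>_def \<beta>_def using k by simp_all
  have "k * (\<alpha> + \<beta>) \<le> k * b" using key ka by (simp add: distrib_left)
  then have abb: "\<alpha> + \<beta> \<le> b" using k by simp
  have zeq: "zeta \<kappa>0 r0 rb \<mu> c' x = Fe (zz s0 sb m (k * x) (k * c'))"
    if "0 \<le> x" "x \<le> c'" "\<bar>sb - s0\<bar> \<le> k * c'" for c' x
  proof -
    have "zeta \<kappa>0 r0 rb \<mu> c' x = mid5 (Fe (k * (x - c') + sb)) (Fe (- k * x + s0)) (Fe m) (Fe (k * x + s0)) (Fe (- k * (x - c') + sb))"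
      unfolding zeta_def hm_def gm_def gp_def hp_def Fem k_def s0_def sb_def ..
    also have "\<dots> = Fe (zz s0 sb m (k * x) (k * c'))"
      by (rule med_eq_Fe) (use k that in auto)
    finally show ?thesis .
  qed
  have zbd: "\<bar>zz s0 sb m (k * x) (k * c')\<bar> < 1" if "0 \<le> x" "x \<le> c'" for c' x
    by (rule zz_bound) (use k that sbd in \<open>auto intro: mult_left_mono\<close>)
  define \<phi> where "\<phi> c' x = Fr (zz s0 sb m (k * x) (k * c'))" for c' x
  have zreal: "zeta \<kappa>0 r0 rb \<mu> c' x = ereal (\<phi> c' x)"
    if "0 \<le> x" "x \<le> c'" "\<bar>sb - s0\<bar> \<le> k * c'" for c' x
    using zeq[OF that] Fe_in[OF zbd[OF that(1,2)]] unfolding \<phi>_def by simp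
  have contFr: "continuous_on {-1<..<1} Fr"
  proof -
    have "sqrt (1 - u\<^sup>2) \<noteq> 0" if "u \<in> {-1<..<1}" for u :: real
    proof -
      have "\<bar>u\<bar> < 1" using that by auto
      then have "u\<^sup>2 < 1" by (simp add: abs_square_less_1)
      then show ?thesis by simp
    qed
    then show ?thesis unfolding Fr_def by (intro continuous_intros) auto
  qed
  have contphi: "continuous_on {u..v} (\<phi> c')" if "0 \<le> u" "v \<le> c'" for c' u v
  proof -
    have "continuous_on {u..v} (\<lambda>x. zz s0 sb m (k * x) (k * c'))"
      unfolding zz_def by (intro continuous_intros)
    moreover have "(\<lambda>x. zz s0 sb m (k * x) (k * c')) ` {u..v} \<subseteq> {-1<..<1}"
      using zbd that by (force simp: abs_less_iff)
    ultimately show ?thesis unfolding \<phi>_def by (rule continuous_on_compose2[OF contFr])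
  qed
  have intphi: "\<phi> c' integrable_on {u..v}" if "0 \<le> u" "v \<le> c'" for c' u v
    by (rule integrable_continuous_interval[OF contphi[OF that]])
  have zint: "(\<lambda>x. real_of_ereal (zeta \<kappa>0 r0 rb \<mu> c' x)) integrable_on {0..c'}"
    and zintg: "integral {0..c'} (\<lambda>x. real_of_ereal (zeta \<kappa>0 r0 rb \<mu> c' x)) = integral {0..c'} (\<phi> c')"
    if "\<bar>sb - s0\<bar> \<le> k * c'" for c'
  proof -
    have eq: "\<phi> c' x = real_of_ereal (zeta \<kappa>0 r0 rb \<mu> c' x)" if "x \<in> {0..c'}" for x
      using zreal[of x c'] that \<open>\<bar>sb - s0\<bar> \<le> k * c'\<close> by simp
    show "(\<lambda>x. real_of_ereal (zeta \<kappa>0 r0 rb \<mu> c' x)) integrable_on {0..c'}"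
      by (rule integrable_eq[OF intphi[of 0 c' c'] eq]) auto
    show "integral {0..c'} (\<lambda>x. real_of_ereal (zeta \<kappa>0 r0 rb \<mu> c' x)) = integral {0..c'} (\<phi> c')"
      by (rule integral_cong) (simp add: eq)
  qed
  have level: "zeta \<kappa>0 r0 rb \<mu> c' x = ereal \<mu> \<longleftrightarrow> \<alpha> \<le> x \<and> x \<le> c' - \<beta>"
    if "0 \<le> x" "x \<le> c'" "\<bar>sb - s0\<bar> \<le> k * c'" for c' x
  proof -
    have kx: "0 \<le> k * x" "k * x \<le> k * c'" using that k by (auto intro: mult_left_mono)
    have "zeta \<kappa>0 r0 rb \<mu> c' x = ereal \<mu> \<longleftrightarrow> \<phi> c' x = Fr m" using zreal[OF that] Frm by simp
    also have "\<dots> \<longleftrightarrow> zz s0 sb m (k * x) (k * c') = m"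
      unfolding \<phi>_def by (rule Fr_inj[OF zbd[OF that(1,2)] sbd(3)])
    also have "\<dots> \<longleftrightarrow> \<bar>m - s0\<bar> \<le> k * x \<and> \<bar>m - sb\<bar> \<le> k * c' - k * x"
      by (rule zz_level) (use kx that in auto)
    also have "\<dots> \<longleftrightarrow> k * \<alpha> \<le> k * x \<and> k * \<beta> \<le> k * (c' - x)" using ka by (simp add: right_diff_distrib)
    also have "\<dots> \<longleftrightarrow> \<alpha> \<le> x \<and> x \<le> c' - \<beta>" using k by auto
    finally show ?thesis .
  qed
  have defd: "zeta_defined \<kappa>0 r0 rb \<mu> c"
    unfolding zeta_defined_def
  proof (intro conjI ballI)
    show "0 < c" by (rule c0)
    show "ereal \<mu> \<le> lam_plus \<kappa>0 r0 rb c"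
    proof (cases "\<bar>upc\<bar> < 1")
      case True
      have "m \<le> upc" using mup2 BC unfolding upc_def by simp
      then have "\<mu> \<le> Fr upc" using Fr_le_iff[OF sbd(3) True] Frm by simp
      then show ?thesis using True lp[of c] unfolding k_def[symmetric] upc_def by simp
    next
      case False then show ?thesis using lp[of c] unfolding k_def[symmetric] upc_def by simp
    qed
    show "lam_minus \<kappa>0 r0 rb c \<le> ereal \<mu>"
    proof (cases "\<bar>loc\<bar> < 1")
      case True
      have "loc \<le> m" using mlo2 BC unfolding loc_def by simp
      then have "Fr loc \<le> \<mu>" using Fr_le_iff[OF True sbd(3)] Frm by simp
      then show ?thesis using True lm[of c] unfolding k_def[symmetric] loc_def by simp
    next
      case False then show ?thesis using lm[of c] unfolding k_def[symmetric] loc_def by simp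
    qed
    fix x assume "x \<in> {0..c}"
    then show "\<bar>zeta \<kappa>0 r0 rb \<mu> c x\<bar> \<noteq> \<infinity>" using zreal[of x c] dC by simp
  qed
  have lvl: "{x\<in>{0..c}. zeta \<kappa>0 r0 rb \<mu> c x = ereal \<mu>} = {\<alpha>..c - \<beta>}"
  proof -
    have "x \<in> {0..c} \<and> zeta \<kappa>0 r0 rb \<mu> c x = ereal \<mu> \<longleftrightarrow> x \<in> {\<alpha>..c - \<beta>}" for x
    proof (cases "x \<in> {0..c}")
      case True then show ?thesis using level[of x c] dC by auto
    next
      case False then show ?thesis using ab0 by auto
    qed
    then show ?thesis by blast
  qed
  have ord: "0 \<le> \<alpha>" "\<alpha> \<le> b - \<beta>" "b - \<beta> \<le> b" "\<alpha> \<le> c - \<beta>" "c - \<beta> \<le> c" using ab0 abb bc by linarith+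
  have Ic: "integral {0..c} (\<phi> c) = integral {0..\<alpha>} (\<phi> c) + integral {\<alpha>..c - \<beta>} (\<phi> c) + integral {c - \<beta>..c} (\<phi> c)"
  proof -
    have "integral {0..\<alpha>} (\<phi> c) + integral {\<alpha>..c} (\<phi> c) = integral {0..c} (\<phi> c)"
      using Henstock_Kurzweil_Integration.integral_combine[where a="0" and c="\<alpha>" and b="c" and f="\<phi> c"] ord intphi[of "0" c c] by auto
    moreover have "integral {\<alpha>..c - \<beta>} (\<phi> c) + integral {c - \<beta>..c} (\<phi> c) = integral {\<alpha>..c} (\<phi> c)"
      using Henstock_Kurzweil_Integration.integral_combine[where a="\<alpha>" and c="c - \<beta>" and b="c" and f="\<phi> c"] ord intphi[of "\<alpha>" c c] by auto
    ultimately show ?thesis by simp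
  qed
  have Ib: "integral {0..b} (\<phi> b) = integral {0..\<alpha>} (\<phi> b) + integral {\<alpha>..b - \<beta>} (\<phi> b) + integral {b - \<beta>..b} (\<phi> b)"
  proof -
    have "integral {0..\<alpha>} (\<phi> b) + integral {\<alpha>..b} (\<phi> b) = integral {0..b} (\<phi> b)"
      using Henstock_Kurzweil_Integration.integral_combine[where a="0" and c="\<alpha>" and b="b" and f="\<phi> b"] ord intphi[of "0" b b] by auto
    moreover have "integral {\<alpha>..b - \<beta>} (\<phi> b) + integral {b - \<beta>..b} (\<phi> b) = integral {\<alpha>..b} (\<phi> b)"
      using Henstock_Kurzweil_Integration.integral_combine[where a="\<alpha>" and c="b - \<beta>" and b="b" and f="\<phi> b"] ord intphi[of "\<alpha>" b b] by auto
    ultimately show ?thesis by simp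
  qed
  have L: "integral {0..\<alpha>} (\<phi> c) = integral {0..\<alpha>} (\<phi> b)"
  proof (rule integral_cong)
    fix x assume x: "x \<in> {0..\<alpha>}"
    have "0 \<le> k * x" "k * x \<le> k * \<alpha>" using x k by (auto intro: mult_left_mono)
    then have "zz s0 sb m (k * x) (k * c) = zz s0 sb m (k * x) (k * b)"
      by (intro zz_left) (use ka key BC dB in auto)
    then show "\<phi> c x = \<phi> b x" unfolding \<phi>_def by simp
  qed
  have M: "integral {\<alpha>..c' - \<beta>} (\<phi> c') = (c' - \<beta> - \<alpha>) * \<mu>" if "\<bar>sb - s0\<bar> \<le> k * c'" "\<alpha> \<le> c' - \<beta>" for c'
  proof -
    have "integral {\<alpha>..c' - \<beta>} (\<phi> c') = integral {\<alpha>..c' - \<beta>} (\<lambda>x. \<mu>)"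
    proof (rule integral_cong)
      fix x assume x: "x \<in> {\<alpha>..c' - \<beta>}"
      then have "0 \<le> x" "x \<le> c'" using ab0 by auto
      then have "zeta \<kappa>0 r0 rb \<mu> c' x = ereal \<mu>" using level[of x c'] that x by auto
      then show "\<phi> c' x = \<mu>" using zreal[of x c'] \<open>0 \<le> x\<close> \<open>x \<le> c'\<close> that by simp
    qed
    also have "\<dots> = (c' - \<beta> - \<alpha>) * \<mu>" using that by (simp add: content_real)
    finally show ?thesis .
  qed
  have R: "integral {c - \<beta>..c} (\<phi> c) = integral {b - \<beta>..b} (\<phi> b)"
  proof -
    have "integral {c - \<beta>..c} (\<phi> c) = integral {c - \<beta>..c} (\<phi> b \<circ> ((+) (b - c)))"
    proof (rule integral_cong)
      fix x assume x: "x \<in> {c - \<beta>..c}"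
      have "k * (c - x) \<le> k * \<beta>" using x k by (auto intro: mult_left_mono)
      then have "k * c - k * x \<le> \<bar>m - sb\<bar>" using ka by (simp add: right_diff_distrib)
      moreover have "k * x \<le> k * c" using x k by (auto intro: mult_left_mono)
      ultimately have "zz s0 sb m (k * x) (k * c) = zz s0 sb m (k * x - k * c + k * b) (k * b)"
        by (intro zz_right) (use ka key BC dB in auto)
      moreover have "k * ((b - c) + x) = k * x - k * c + k * b" by (simp add: algebra_simps)
      ultimately show "\<phi> c x = (\<phi> b \<circ> ((+) (b - c))) x" unfolding \<phi>_def by simp
    qed
    also have "\<dots> = integral {c - \<beta> + (b - c)..c + (b - c)} (\<phi> b)" by (rule integral_shift_Icc_real)
    finally show ?thesis by simp
  qed
  have "integral {0..c} (\<phi> c) - integral {0..b} (\<phi> b) = (c - \<beta> - \<alpha>) * \<mu> - (b - \<beta> - \<alpha>) * \<mu>"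
    using Ic Ib L R M[OF dC ord(4)] M[OF dB ord(2)] by simp
  also have "\<dots> = \<mu> * (c - b)" by (simp add: algebra_simps)
  finally have Id: "integral {0..c} (\<phi> c) - integral {0..b} (\<phi> b) = \<mu> * (c - b)" .
  show ?thesis
  proof (intro conjI)
    show "zeta_defined \<kappa>0 r0 rb \<mu> c" by (rule defd)
    show "(\<lambda>x. real_of_ereal (zeta \<kappa>0 r0 rb \<mu> c x)) integrable_on {0..c}" by (rule zint[OF dC])
    show "(\<lambda>x. real_of_ereal (zeta \<kappa>0 r0 rb \<mu> b x)) integrable_on {0..b}" by (rule zint[OF dB])
    show "integral {0..c} (\<lambda>x. real_of_ereal (zeta \<kappa>0 r0 rb \<mu> c x))
        - integral {0..b} (\<lambda>x. real_of_ereal (zeta \<kappa>0 r0 rb \<mu> b x)) = \<mu> * (c - b)"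
      using zintg[OF dC] zintg[OF dB] Id by simp
    show "\<exists>p q. p \<le> q \<and> {x\<in>{0..c}. zeta \<kappa>0 r0 rb \<mu> c x = ereal \<mu>} = {p..q} \<and> c - b \<le> q - p"
      using lvl ord abb by (intro exI[of _ \<alpha>] exI[of _ "c - \<beta>"]) auto
  qed
qed


end
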